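(* Let $A \in \mathbb{R}^{n\times d}$, $b \in \mathbb{R}^n$, and suppose $Ax=b$ admits a solution $x^*$ (not necessarily unique). Let $w$ be a random variable in $\mathbb{R}^n$, $\mathcal{N}(w) = \mathrm{span}\lbrace z \in \mathbb{R}^d : \mathbb{P}[z'A'w = 0]=1\rbrace$, $\mathcal{R}(w) = \mathcal{N}(w)^\perp$, and let $\mathcal{V}(w)$ be the subspace with $\mathcal{V}(w) \perp \mathcal{R}(w)$ and $\mathcal{V}(w) \oplus \mathcal{R}(w) = \mathrm{row}(A)$. Let $w_0,w_1,\ldots$ be random variables in $\mathbb{R}^n$ with $\mathbb{P}[A'w_l \in \mathcal{R}(w)]=1$ for all $l$, let $T = \min\lbrace k\geq 0 : \mathrm{span}\lbrace A'w_0,\ldots,A'w_k\rbrace \supset \mathcal{R}(w)\rbrace$, let $x_0\in\mathbb{R}^d$ be arbitrary, $S_0 = I_d$, and for $l\geq 0$ $$x_{l+1} = \begin{cases} x_l + \dfrac{S_l A' w_l w_l'(b - A x_l)}{w_l' A S_l A' w_l} & S_l A'w_l \neq 0,\\ x_l & \text{otherwise,}\end{cases}\qquad S_{l+1} = \begin{cases} S_l - \dfrac{S_l A' w_l w_l' A S_l}{w_l' A S_l A' w_l} & S_l A' w_l \neq 0,\\ S_l & \text{otherwise.}\end{cases}$$ Then, almost surely on the event $\lbrace T < \infty\rbrace$, $Ax_{T+1} = b$ if and only if $P_{\mathcal{V}(w)} x_0 = P_{\mathcal{V}(w)} x^*$.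
   Context: $P_W$ denotes orthogonal projection onto subspace $W$; $\mathrm{row}(A)$ is the row space of $A$ (a subspace of $\mathbb{R}^d$); $A'$ is the transpose. *)

theory Defs
  imports "HOL-Probability.Probability"
begin

definition row_space :: "real^'d^'n \<Rightarrow> (real^'d) set" where
  "row_space A = span (rows A)"

definition orth_proj :: "('a::real_inner) set \<Rightarrow> 'a \<Rightarrow> 'a" where
  "orth_proj W x = (THE p. p \<in> W \<and> (\<forall>y\<in>W. inner (x - p) y = 0))"

definition outer :: "real^'m \<Rightarrow> real^'k \<Rightarrow> real^'k^'m" where
  "outer u v = (\<chi> i j. u $ i * v $ j)"

primrec iter :: "real^'d^'n \<Rightarrow> real^'n \<Rightarrow> real^'d \<Rightarrow> (nat \<Rightarrow> real^'n)
                  \<Rightarrow> nat \<Rightarrow> (real^'d) \<times> (real^'d^'d)" where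
  "iter A b x0 ws 0 = (x0, mat 1)"
| "iter A b x0 ws (Suc l) =
     (let x = fst (iter A b x0 ws l); S = snd (iter A b x0 ws l); w = ws l;
          den = w \<bullet> ((A ** S ** transpose A) *v w)
      in if (S ** transpose A) *v w \<noteq> 0
         then (x + (1 / den) *\<^sub>R ((S ** transpose A ** outer w w) *v (b - A *v x)),
               S - (1 / den) *\<^sub>R (S ** transpose A ** outer w w ** A ** S))
         else (x, S))"

definition Nsp :: "'a measure \<Rightarrow> real^'d^'n \<Rightarrow> ('a \<Rightarrow> real^'n) \<Rightarrow> (real^'d) set" where
  "Nsp M A w = span {z. measure M {\<omega> \<in> space M. z \<bullet> (transpose A *v w \<omega>) = 0} = 1}"

definition Rsp :: "'a measure \<Rightarrow> real^'d^'n \<Rightarrow> ('a \<Rightarrow> real^'n) \<Rightarrow> (real^'d) set" where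
  "Rsp M A w = orthogonal_comp (Nsp M A w)"

text \<open>V(w): the subspace orthogonal to R(w) with V(w) + R(w) = row(A) (direct sum);
  since R(w) is contained in row(A), this is row(A) intersected with R(w)^perp.\<close>
definition Vsp :: "'a measure \<Rightarrow> real^'d^'n \<Rightarrow> ('a \<Rightarrow> real^'n) \<Rightarrow> (real^'d) set" where
  "Vsp M A w = row_space A \<inter> orthogonal_comp (Rsp M A w)"

end

theory Submission imports Defs "HOL-Probability.Probability" begin

declare transpose_matrix_vector[simp del]

lemma outer_mv: "outer u v *v y = (v \<bullet> y) *\<^sub>R u"
  by (simp add: outer_def matrix_vector_mult_def vec_eq_iff inner_vec_def sum_distrib_left mult.commute mult.left_commute)

lemma transp_inner: "(transpose A *v w) \<bullet> x = w \<bullet> (A *v (x::real^'d))"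
  by (simp add: dot_lmul_matrix transpose_matrix_vector)

lemma mv_row: "(A *v x) $ i = row i A \<bullet> (x::real^'d)"
  by (simp add: matrix_vector_mult_def row_def inner_vec_def mult.commute)

lemma null_iff_orth_row:
  fixes A :: "real^'d^'n"
  shows "A *v e = 0 \<longleftrightarrow> (\<forall>r\<in>row_space A. e \<bullet> r = 0)"
proof
  assume h: "A *v e = 0"
  show "\<forall>r\<in>row_space A. e \<bullet> r = 0"
  proof
    fix r assume "r \<in> row_space A"
    then have "r \<in> span (rows A)" by (simp add: row_space_def)
    then show "e \<bullet> r = 0"
    proof (induct rule: span_induct)
      case base
      show ?case by (rule subspace_orthogonal_comp[of "{e}", unfolded orthogonal_comp_def orthogonal_def, simplified])
    next
      case (step x)
      then obtain i where "x = row i A" by (auto simp: rows_def)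
      moreover have "(A *v e) $ i = 0" using h by simp
      ultimately show ?case using mv_row[of A e i] by (simp add: inner_commute)
    qed
  qed
next
  assume h: "\<forall>r\<in>row_space A. e \<bullet> r = 0"
  show "A *v e = 0"
  proof (subst vec_eq_iff, intro allI)
    fix i
    have "row i A \<in> row_space A" unfolding row_space_def rows_def
      by (intro span_base) auto
    then show "(A *v e) $ i = 0 $ i" using h mv_row[of A e i] by (metis inner_commute zero_index)
  qed
qed

lemma orth_proj_ex1:
  fixes W :: "(real^'d) set"
  assumes W: "subspace W"
  shows "\<exists>!p. p \<in> W \<and> (\<forall>y\<in>W. inner (z - p) y = 0)"
proof -
  have "z \<in> W + orthogonal_comp W" using subspace_sum_orthogonal_comp[OF W] by simp
  then obtain p q where pq: "p \<in> W" "q \<in> orthogonal_comp W" "z = p + q"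
    by (meson set_plus_elim)
  have ex: "p \<in> W \<and> (\<forall>y\<in>W. inner (z - p) y = 0)"
    using pq by (auto simp: orthogonal_comp_def orthogonal_def inner_commute)
  show ?thesis
  proof (rule ex1I[of _ p])
    show "p \<in> W \<and> (\<forall>y\<in>W. inner (z - p) y = 0)" by (rule ex)
  next
    fix p' assume h: "p' \<in> W \<and> (\<forall>y\<in>W. inner (z - p') y = 0)"
    have d: "p' - p \<in> W" using h pq(1) W by (simp add: subspace_diff)
    have "inner (p' - p) (p' - p) = inner (z - p) (p' - p) - inner (z - p') (p' - p)"
      by (simp add: algebra_simps)
    also have "\<dots> = 0" using d h ex by simp
    finally show "p' = p" by simp
  qed
qed

lemma orth_proj_char:
  fixes W :: "(real^'d) set"
  assumes W: "subspace W"
  shows "orth_proj W z = p \<longleftrightarrow> p \<in> W \<and> (\<forall>y\<in>W. inner (z - p) y = 0)"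
proof -
  have "orth_proj W z \<in> W \<and> (\<forall>y\<in>W. inner (z - orth_proj W z) y = 0)"
    unfolding orth_proj_def by (rule theI'[OF orth_proj_ex1[OF W]])
  then show ?thesis using orth_proj_ex1[OF W, of z] by metis
qed

lemma orth_proj_eq_iff:
  fixes W :: "(real^'d) set"
  assumes W: "subspace W"
  shows "orth_proj W x = orth_proj W y \<longleftrightarrow> (\<forall>v\<in>W. inner (x - y) v = 0)"
proof -
  have px: "orth_proj W x \<in> W \<and> (\<forall>v\<in>W. inner (x - orth_proj W x) v = 0)"
    using orth_proj_char[OF W] by blast
  have py: "orth_proj W y \<in> W \<and> (\<forall>v\<in>W. inner (y - orth_proj W y) v = 0)"
    using orth_proj_char[OF W] by blast
  show ?thesis
  proof
    assume e: "orth_proj W x = orth_proj W y"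
    show "\<forall>v\<in>W. inner (x - y) v = 0"
    proof
      fix v assume v: "v \<in> W"
      have "inner (x - y) v = inner (x - orth_proj W x) v - inner (y - orth_proj W y) v"
        using e by (simp add: algebra_simps)
      then show "inner (x - y) v = 0" using px py v by simp
    qed
  next
    assume h: "\<forall>v\<in>W. inner (x - y) v = 0"
    have "\<forall>v\<in>W. inner (y - orth_proj W x) v = 0"
    proof
      fix v assume v: "v \<in> W"
      have "inner (y - orth_proj W x) v = inner (x - orth_proj W x) v - inner (x - y) v"
        by (simp add: algebra_simps)
      then show "inner (y - orth_proj W x) v = 0" using px h v by simp
    qed
    then show "orth_proj W x = orth_proj W y"
      using orth_proj_char[OF W, of y "orth_proj W x"] px by simp
  qed
qed

definition Inv :: "(real^'d) set \<Rightarrow> real^'d^'d \<Rightarrow> real^'d \<Rightarrow> real^'d \<Rightarrow> real^'d \<Rightarrow> bool" where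
  "Inv U S x x0 xstar \<longleftrightarrow> (\<forall>u v. (S *v u) \<bullet> v = u \<bullet> (S *v v)) \<and> (\<forall>u\<in>U. S *v u = 0)
     \<and> (\<forall>v. v - S *v v \<in> U) \<and> x - x0 \<in> U \<and> (\<forall>u\<in>U. (x - xstar) \<bullet> u = 0)"

lemma kernel_subspace: "subspace {u. (M::real^'d^'d) *v u = 0}"
  by (auto simp: subspace_def matrix_vector_right_distrib matrix_vector_mult_scaleR)

lemma orth_subspace: "subspace {u. (e::real^'d) \<bullet> u = 0}"
  by (rule subspace_orthogonal_comp[of "{e}", unfolded orthogonal_comp_def orthogonal_def, simplified])

lemma step:
  fixes A :: "real^'d^'n" and w :: "real^'n"
  assumes I: "Inv U S x x0 xstar" and U: "subspace U" and xs: "A *v xstar = b"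
    and P: "P = (let den = w \<bullet> ((A ** S ** transpose A) *v w)
      in if (S ** transpose A) *v w \<noteq> 0
         then (x + (1 / den) *\<^sub>R ((S ** transpose A ** outer w w) *v (b - A *v x)),
               S - (1 / den) *\<^sub>R (S ** transpose A ** outer w w ** A ** S))
         else (x, S))"
  shows "Inv (span (insert (transpose A *v w) U)) (snd P) (fst P) x0 xstar"
proof -
  define a where "a = transpose A *v w"
  define c where "c = S *v a"
  define den where "den = w \<bullet> ((A ** S ** transpose A) *v w)"
  define U' where "U' = span (insert a U)"
  have sym: "\<And>u v. (S *v u) \<bullet> v = u \<bullet> (S *v v)" and SU: "\<And>u. u \<in> U \<Longrightarrow> S *v u = 0"
    and dU: "\<And>v. v - S *v v \<in> U" and xU: "x - x0 \<in> U" and xo: "\<And>u. u \<in> U \<Longrightarrow> (x - xstar) \<bullet> u = 0"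
    using I by (auto simp: Inv_def)
  have UU': "U \<subseteq> U'" unfolding U'_def using span_superset[of "insert a U"] by blast
  have aU': "a \<in> U'" unfolding U'_def by (simp add: span_base)
  have sU': "subspace U'" unfolding U'_def by simp
  have cond: "(S ** transpose A) *v w = c" by (simp add: c_def a_def matrix_vector_mul_assoc)
  have wA: "\<And>y. w \<bullet> (A *v y) = a \<bullet> y" by (simp add: a_def transp_inner)
  have den_eq: "den = a \<bullet> c" by (simp add: den_def c_def a_def matrix_vector_mul_assoc[symmetric] transp_inner)
  have SSa: "S *v c = c"
  proof -
    have "S *v (a - c) = 0" using SU dU c_def by simp
    then show ?thesis by (simp add: matrix_vector_mult_diff_distrib c_def)
  qed
  have cc: "c \<bullet> c = a \<bullet> c" using sym[of a c] SSa c_def by simp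
  have ca: "c \<bullet> a = a \<bullet> c" by (simp add: inner_commute)
  have cU: "\<And>u. u \<in> U \<Longrightarrow> c \<bullet> u = 0" using sym SU c_def by simp
  have cU': "c \<in> U'"
  proof -
    have "a - (a - c) \<in> U'" using aU' UU' dU[of a] c_def sU' by (meson subsetD subspace_diff)
    then show ?thesis by simp
  qed
  have xo_a: "c = 0 \<Longrightarrow> (x - xstar) \<bullet> a = 0" using xo dU[of a] c_def by simp
  show ?thesis
  proof (cases "c = 0")
    case True
    then have Pe: "P = (x, S)" using P cond by (simp add: Let_def)
    have "\<forall>u\<in>U'. S *v u = 0"
    proof
      fix u assume "u \<in> U'"
      then have "u \<in> span (insert a U)" by (simp add: U'_def)
      then show "S *v u = 0"
      proof (induct rule: span_induct)
        case base show ?case by (rule kernel_subspace)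
      next
        case (step y) then show ?case using SU True c_def by auto
      qed
    qed
    moreover have "\<forall>u\<in>U'. (x - xstar) \<bullet> u = 0"
    proof
      fix u assume "u \<in> U'"
      then have "u \<in> span (insert a U)" by (simp add: U'_def)
      then show "(x - xstar) \<bullet> u = 0"
      proof (induct rule: span_induct)
        case base show ?case by (rule orth_subspace)
      next
        case (step y) then show ?case using xo xo_a True by auto
      qed
    qed
    ultimately show ?thesis using Pe sym dU xU UU' unfolding Inv_def U'_def[symmetric] a_def[symmetric] by auto
  next
    case False
    have dpos: "den \<noteq> 0" using False cc den_eq by (metis inner_eq_zero_iff)
    define x' where "x' = x + ((a \<bullet> (xstar - x)) / den) *\<^sub>R c"
    define S' where "S' = S - (1 / den) *\<^sub>R (S ** transpose A ** outer w w ** A ** S)"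
    have Pe: "P = (x', S')"
    proof -
      have "(S ** transpose A ** outer w w) *v (b - A *v x) = (a \<bullet> (xstar - x)) *\<^sub>R c"
        by (simp add: matrix_vector_mul_assoc[symmetric] outer_mv matrix_vector_mult_scaleR
             xs[symmetric] matrix_vector_mult_diff_distrib[symmetric] wA c_def a_def)
      then show ?thesis using P cond False unfolding x'_def S'_def den_def[symmetric]
        by (simp add: Let_def)
    qed
    have S'v: "\<And>v. S' *v v = S *v v - ((c \<bullet> v) / den) *\<^sub>R c"
    proof -
      fix v
      have "(S ** transpose A ** outer w w ** A ** S) *v v = (c \<bullet> v) *\<^sub>R c"
        by (simp add: matrix_vector_mul_assoc[symmetric] outer_mv matrix_vector_mult_scaleR wA
              c_def a_def sym)
      then show "S' *v v = S *v v - ((c \<bullet> v) / den) *\<^sub>R c"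
        by (simp add: S'_def matrix_vector_mult_diff_rdistrib scaleR_matrix_vector_assoc[symmetric])
    qed
    have i1: "\<forall>u v. (S' *v u) \<bullet> v = u \<bullet> (S' *v v)"
    proof (intro allI)
      fix u v
      have "(S *v u) \<bullet> v = u \<bullet> (S *v v)" by (rule sym)
      then show "(S' *v u) \<bullet> v = u \<bullet> (S' *v v)"
        by (simp add: S'v inner_diff_left inner_diff_right inner_commute[of u c])
    qed
    have i2: "\<forall>u\<in>U'. S' *v u = 0"
    proof
      fix u assume "u \<in> U'"
      then have "u \<in> span (insert a U)" by (simp add: U'_def)
      then show "S' *v u = 0"
      proof (induct rule: span_induct)
        case base show ?case by (rule kernel_subspace)
      next
        case (step y)
        then show ?case
        proof
          assume "y = a" then show ?thesis using S'v[of a] ca den_eq dpos c_def by simp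
        next
          assume "y \<in> U" then show ?thesis using S'v[of y] SU cU by simp
        qed
      qed
    qed
    have i3: "\<forall>v. v - S' *v v \<in> U'"
    proof
      fix v
      have e1: "v - S' *v v = (v - S *v v) + ((c \<bullet> v) / den) *\<^sub>R c" by (simp add: S'v)
      have h1: "((c \<bullet> v) / den) *\<^sub>R c \<in> U'" using sU' cU' by (rule subspace_scale)
      have h2: "v - S *v v \<in> U'" using dU[of v] UU' by blast
      have "(v - S *v v) + ((c \<bullet> v) / den) *\<^sub>R c \<in> U'" by (rule subspace_add[OF sU' h2 h1])
      then show "v - S' *v v \<in> U'" by (simp only: e1)
    qed
    have i4: "x' - x0 \<in> U'"
    proof -
      have e1: "x' - x0 = (x - x0) + ((a \<bullet> (xstar - x)) / den) *\<^sub>R c" by (simp add: x'_def)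
      have h1: "((a \<bullet> (xstar - x)) / den) *\<^sub>R c \<in> U'" using sU' cU' by (rule subspace_scale)
      have h2: "x - x0 \<in> U'" using xU UU' by blast
      have "(x - x0) + ((a \<bullet> (xstar - x)) / den) *\<^sub>R c \<in> U'" by (rule subspace_add[OF sU' h2 h1])
      then show ?thesis by (simp only: e1)
    qed
    have i5: "\<forall>u\<in>U'. (x' - xstar) \<bullet> u = 0"
    proof
      fix u assume "u \<in> U'"
      then have "u \<in> span (insert a U)" by (simp add: U'_def)
      then show "(x' - xstar) \<bullet> u = 0"
      proof (induct rule: span_induct)
        case base show ?case by (rule orth_subspace)
      next
        case (step y)
        then show ?case
        proof
          assume "y = a"
          have "(x' - xstar) \<bullet> a = (x - xstar) \<bullet> a + (a \<bullet> (xstar - x)) / den * (c \<bullet> a)"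
            by (simp add: x'_def algebra_simps)
          also have "\<dots> = 0" using ca den_eq dpos by (simp add: inner_diff_left inner_diff_right inner_commute)
          finally show ?thesis using \<open>y = a\<close> by simp
        next
          assume "y \<in> U" then show ?thesis using xo[of y] cU[of y]
            by (simp add: x'_def algebra_simps)
        qed
      qed
    qed
    show ?thesis using Pe i1 i2 i3 i4 i5 unfolding Inv_def U'_def a_def by simp
  qed
qed

lemma iter_Inv:
  fixes A :: "real^'d^'n" and ws :: "nat \<Rightarrow> real^'n"
  assumes xs: "A *v xstar = b"
  shows "Inv (span {transpose A *v ws i | i. i < l}) (snd (iter A b x0 ws l)) (fst (iter A b x0 ws l)) x0 xstar"
proof (induction l)
  case 0
  show ?case by (simp add: Inv_def)
next
  case (Suc l)
  have set_eq: "{transpose A *v ws i | i. i < Suc l} = insert (transpose A *v ws l) {transpose A *v ws i | i. i < l}"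
    by (auto simp: less_Suc_eq)
  have "Inv (span (insert (transpose A *v ws l) (span {transpose A *v ws i | i. i < l})))
     (snd (iter A b x0 ws (Suc l))) (fst (iter A b x0 ws (Suc l))) x0 xstar"
    by (rule step[OF Suc.IH subspace_span xs]) (simp add: Let_def)
  moreover have "span (insert (transpose A *v ws l) (span {transpose A *v ws i | i. i < l}))
      = span {transpose A *v ws i | i. i < Suc l}"
    unfolding set_eq by (simp add: span_insert span_span)
  ultimately show ?case by simp
qed

lemma det_main:
  fixes A :: "real^'d^'n" and ws :: "nat \<Rightarrow> real^'n" and R :: "(real^'d) set"
  assumes xs: "A *v xstar = b" and sR: "subspace R" and Rrow: "R \<subseteq> row_space A"
    and aR: "\<And>l. transpose A *v ws l \<in> R"
    and cov: "R \<subseteq> span {transpose A *v ws i | i. i \<le> T}"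
  shows "A *v fst (iter A b x0 ws (Suc T)) = b \<longleftrightarrow>
     orth_proj (row_space A \<inter> orthogonal_comp R) x0 = orth_proj (row_space A \<inter> orthogonal_comp R) xstar"
proof -
  define x where "x = fst (iter A b x0 ws (Suc T))"
  define V where "V = row_space A \<inter> orthogonal_comp R"
  have seq: "{transpose A *v ws i | i. i \<le> T} = {transpose A *v ws i | i. i < Suc T}"
    by (auto simp: less_Suc_eq_le)
  have U1: "span {transpose A *v ws i | i. i < Suc T} \<subseteq> R"
    using aR sR by (intro span_minimal) auto
  have UR: "span {transpose A *v ws i | i. i < Suc T} = R" using U1 cov seq by auto
  have I: "Inv R (snd (iter A b x0 ws (Suc T))) x x0 xstar"
    using iter_Inv[OF xs, of ws "Suc T" x0] UR x_def by simp
  have d: "x - x0 \<in> R" and o: "\<And>u. u \<in> R \<Longrightarrow> (x - xstar) \<bullet> u = 0" using I by (auto simp: Inv_def)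
  have srow: "subspace (row_space A)" by (simp add: row_space_def)
  have sV: "subspace V" unfolding V_def by (intro subspace_inter srow subspace_orthogonal_comp)
  have lhs: "A *v x = b \<longleftrightarrow> (\<forall>r\<in>row_space A. (x - xstar) \<bullet> r = 0)"
  proof -
    have "A *v x = b \<longleftrightarrow> A *v (x - xstar) = 0" by (simp add: matrix_vector_mult_diff_distrib xs)
    then show ?thesis by (simp add: null_iff_orth_row)
  qed
  have rhs: "orth_proj V x0 = orth_proj V xstar \<longleftrightarrow> (\<forall>v\<in>V. (x0 - xstar) \<bullet> v = 0)"
    by (rule orth_proj_eq_iff[OF sV])
  have "(\<forall>r\<in>row_space A. (x - xstar) \<bullet> r = 0) \<longleftrightarrow> (\<forall>v\<in>V. (x0 - xstar) \<bullet> v = 0)"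
  proof
    assume h: "\<forall>r\<in>row_space A. (x - xstar) \<bullet> r = 0"
    show "\<forall>v\<in>V. (x0 - xstar) \<bullet> v = 0"
    proof
      fix v assume v: "v \<in> V"
      have "(x0 - xstar) \<bullet> v = (x - xstar) \<bullet> v - (x - x0) \<bullet> v" by (simp add: algebra_simps)
      moreover have "(x - xstar) \<bullet> v = 0" using h v V_def by auto
      moreover have "(x - x0) \<bullet> v = 0" using d v V_def by (auto simp: orthogonal_comp_def orthogonal_def)
      ultimately show "(x0 - xstar) \<bullet> v = 0" by simp
    qed
  next
    assume h: "\<forall>v\<in>V. (x0 - xstar) \<bullet> v = 0"
    show "\<forall>r\<in>row_space A. (x - xstar) \<bullet> r = 0"
    proof
      fix r assume r: "r \<in> row_space A"
      have "r \<in> R + orthogonal_comp R" using subspace_sum_orthogonal_comp[OF sR] by simp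
      then obtain p q where pq: "p \<in> R" "q \<in> orthogonal_comp R" "r = p + q"
        by (meson set_plus_elim)
      have "q = r - p" using pq by simp
      moreover have "p \<in> row_space A" using pq Rrow by auto
      ultimately have "q \<in> row_space A" using r srow by (simp add: subspace_diff)
      then have qV: "q \<in> V" using pq V_def by simp
      have "(x - xstar) \<bullet> r = (x - xstar) \<bullet> p + (x0 - xstar) \<bullet> q + (x - x0) \<bullet> q"
        using pq by (simp add: algebra_simps)
      moreover have "(x - xstar) \<bullet> p = 0" using o pq by simp
      moreover have "(x0 - xstar) \<bullet> q = 0" using h qV by simp
      moreover have "(x - x0) \<bullet> q = 0" using d pq by (auto simp: orthogonal_comp_def orthogonal_def)
      ultimately show "(x - xstar) \<bullet> r = 0" by simp
    qed
  qed
  then show ?thesis using lhs rhs x_def V_def by simp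
qed

lemma R_sub_row:
  fixes M :: "'a measure" and A :: "real^'d^'n" and w :: "'a \<Rightarrow> real^'n"
  assumes P: "prob_space M"
  shows "Rsp M A w \<subseteq> row_space A"
proof -
  have srow: "subspace (row_space A)" by (simp add: row_space_def)
  have "orthogonal_comp (row_space A) \<subseteq> Nsp M A w"
  proof
    fix q assume q: "q \<in> orthogonal_comp (row_space A)"
    then have "\<forall>r\<in>row_space A. q \<bullet> r = 0"
      by (auto simp: orthogonal_comp_def orthogonal_def inner_commute)
    then have Aq: "A *v q = 0" by (simp add: null_iff_orth_row)
    have "\<And>\<omega>. q \<bullet> (transpose A *v w \<omega>) = 0"
      by (simp add: inner_commute[of q] transp_inner Aq)
    then have "{\<omega> \<in> space M. q \<bullet> (transpose A *v w \<omega>) = 0} = space M" by simp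
    then have "measure M {\<omega> \<in> space M. q \<bullet> (transpose A *v w \<omega>) = 0} = 1"
      using prob_space.prob_space[OF P] by simp
    then show "q \<in> Nsp M A w" unfolding Nsp_def by (intro span_base) simp
  qed
  then have "orthogonal_comp (Nsp M A w) \<subseteq> orthogonal_comp (orthogonal_comp (row_space A))"
    by (rule orthogonal_comp_anti_mono)
  then show ?thesis unfolding Rsp_def orthogonal_comp_self[OF srow] .
qed

theorem mainTheorem6:
  fixes M :: "'a measure"
    and A :: "real^'d^'n" and b :: "real^'n" and xstar x0 :: "real^'d"
    and w :: "'a \<Rightarrow> real^'n" and ws :: "nat \<Rightarrow> 'a \<Rightarrow> real^'n"
  assumes "prob_space M"
    and "A *v xstar = b"
    and "w \<in> borel_measurable M"
    and "\<And>l. ws l \<in> borel_measurable M"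
    and "\<And>l. measure M {\<omega> \<in> space M. transpose A *v ws l \<omega> \<in> Rsp M A w} = 1"
  shows "AE \<omega> in M.
           (\<exists>k. Rsp M A w \<subseteq> span {transpose A *v ws i \<omega> | i. i \<le> k}) \<longrightarrow>
           (let T = (LEAST k. Rsp M A w \<subseteq> span {transpose A *v ws i \<omega> | i. i \<le> k})
            in A *v fst (iter A b x0 (\<lambda>l. ws l \<omega>) (Suc T)) = b
               \<longleftrightarrow> orth_proj (Vsp M A w) x0 = orth_proj (Vsp M A w) xstar)"
proof -
  note P = assms(1)
  have ae1: "\<And>l. AE \<omega> in M. \<omega> \<in> {\<omega> \<in> space M. transpose A *v ws l \<omega> \<in> Rsp M A w}"
    by (rule prob_space.AE_prob_1[OF P]) (use assms(5) in simp)
  have "AE \<omega> in M. \<forall>l. transpose A *v ws l \<omega> \<in> Rsp M A w"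
    unfolding AE_all_countable using ae1 by (auto elim: eventually_mono)
  then show ?thesis
  proof (rule eventually_mono)
    fix \<omega> assume aR: "\<forall>l. transpose A *v ws l \<omega> \<in> Rsp M A w"
    show "(\<exists>k. Rsp M A w \<subseteq> span {transpose A *v ws i \<omega> | i. i \<le> k}) \<longrightarrow>
           (let T = (LEAST k. Rsp M A w \<subseteq> span {transpose A *v ws i \<omega> | i. i \<le> k})
            in A *v fst (iter A b x0 (\<lambda>l. ws l \<omega>) (Suc T)) = b
               \<longleftrightarrow> orth_proj (Vsp M A w) x0 = orth_proj (Vsp M A w) xstar)"
    proof
      assume ex: "\<exists>k. Rsp M A w \<subseteq> span {transpose A *v ws i \<omega> | i. i \<le> k}"
      define T where "T = (LEAST k. Rsp M A w \<subseteq> span {transpose A *v ws i \<omega> | i. i \<le> k})"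
      have cov: "Rsp M A w \<subseteq> span {transpose A *v ws i \<omega> | i. i \<le> T}"
        unfolding T_def using ex by (rule LeastI_ex)
      have "A *v fst (iter A b x0 (\<lambda>l. ws l \<omega>) (Suc T)) = b
               \<longleftrightarrow> orth_proj (Vsp M A w) x0 = orth_proj (Vsp M A w) xstar"
        unfolding Vsp_def
        by (rule det_main[OF assms(2) _ R_sub_row[OF P]])
           (use aR cov in \<open>auto simp: Rsp_def subspace_orthogonal_comp\<close>)
      then show "let T = (LEAST k. Rsp M A w \<subseteq> span {transpose A *v ws i \<omega> | i. i \<le> k})
            in A *v fst (iter A b x0 (\<lambda>l. ws l \<omega>) (Suc T)) = b
               \<longleftrightarrow> orth_proj (Vsp M A w) x0 = orth_proj (Vsp M A w) xstar"
        unfolding T_def Let_def .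
    qed
  qed
qed

end
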